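(* Let $(Y_n)_{n\geq0}$ be a Galton–Watson process with offspring distribution $\theta$, with $Y_0=1$ under $\mathbb P_1$. Then $$\mathbb P_1(Y_r\neq0)\sim\frac{2}{r^2}\quad\text{as } r\to\infty,$$ and the distribution of $r^{-2}Y_r$ under $\mathbb P_1(\cdot\mid Y_r\neq0)$ converges as $r\to\infty$ to the probability distribution on $[0,\infty)$ with Laplace transform $$\lambda\mapsto 1-\Big(1+\sqrt{\tfrac{2}{\lambda}}\Big)^{-2},\qquad\lambda>0.$$
   Context: $\theta$ is the probability distribution on $\{0,1,2,\dots\}$ with generating function $g_\theta(y)=\sum_k\theta(k)y^k=1-\frac{8}{\big(\sqrt{\frac{9-y}{1-y}}+2\big)^2-1}$ for $0\leq y<1$. *)

theory Defs
  imports "HOL-Probability.Probability"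
begin

fun offspring_sum :: "nat pmf \<Rightarrow> nat \<Rightarrow> nat pmf" where
  "offspring_sum \<theta> 0 = return_pmf 0"
| "offspring_sum \<theta> (Suc k) =
     map_pmf (\<lambda>(a, b). a + b) (pair_pmf \<theta> (offspring_sum \<theta> k))"

text \<open>Law of Y_n for the Galton-Watson process with offspring law theta, started from Y_0 = 1.\<close>
fun gw_law :: "nat pmf \<Rightarrow> nat \<Rightarrow> nat pmf" where
  "gw_law \<theta> 0 = return_pmf 1"
| "gw_law \<theta> (Suc n) = bind_pmf (gw_law \<theta> n) (offspring_sum \<theta>)"

definition g_theta :: "real \<Rightarrow> real" where
  "g_theta y = 1 - 8 / ((sqrt ((9 - y) / (1 - y)) + 2)^2 - 1)"

end

theory Submission
  imports Defs "HOL-Real_Asymp.Real_Asymp"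
begin


definition GF :: "nat pmf \<Rightarrow> real \<Rightarrow> ennreal" where
  "GF p y = (\<integral>\<^sup>+ k. ennreal (y ^ k) \<partial>measure_pmf p)"

lemma GF_le1: assumes "0 \<le> y" "y \<le> 1" shows "GF p y \<le> 1"
proof -
  have "GF p y \<le> (\<integral>\<^sup>+ k. 1 \<partial>measure_pmf p)"
    unfolding GF_def by (intro nn_integral_mono) (use assms in \<open>auto simp: power_le_one\<close>)
  also have "\<dots> = 1" by (simp add: measure_pmf.emeasure_space_1)
  finally show ?thesis .
qed

lemma GF_offspring: assumes "0 \<le> y" shows "GF (offspring_sum \<theta> k) y = GF \<theta> y ^ k"
proof (induction k)
  case 0 then show ?case by (simp add: GF_def)
next
  case (Suc k)
  have "GF (offspring_sum \<theta> (Suc k)) y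
     = (\<integral>\<^sup>+ a. \<integral>\<^sup>+ b. ennreal (y ^ a) * ennreal (y ^ b) \<partial>offspring_sum \<theta> k \<partial>\<theta>)"
    by (simp add: GF_def nn_integral_pair_pmf' power_add ennreal_mult assms)
  also have "\<dots> = (\<integral>\<^sup>+ a. ennreal (y ^ a) * GF (offspring_sum \<theta> k) y \<partial>\<theta>)"
    by (simp add: GF_def nn_integral_cmult)
  also have "\<dots> = GF \<theta> y * GF (offspring_sum \<theta> k) y"
    by (simp add: GF_def nn_integral_multc)
  finally show ?case using Suc by simp
qed

lemma GF_bind: assumes "0 \<le> y" "GF \<theta> y = ennreal z" "0 \<le> z"
  shows "GF (bind_pmf p (offspring_sum \<theta>)) y = GF p z"
proof -
  have "GF (bind_pmf p (offspring_sum \<theta>)) y = (\<integral>\<^sup>+ k. GF (offspring_sum \<theta> k) y \<partial>p)"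
    by (simp add: GF_def)
  also have "\<dots> = (\<integral>\<^sup>+ k. ennreal z ^ k \<partial>p)"
    by (simp add: GF_offspring[OF assms(1)] assms(2))
  also have "\<dots> = GF p z"
    unfolding GF_def by (simp add: ennreal_power assms)
  finally show ?thesis .
qed

lemma GF_sum: assumes "0 \<le> y" "y \<le> 1"
  shows "GF p y = ennreal (\<Sum>k. pmf p k * y ^ k)"
proof -
  have eq: "GF p y = (\<Sum>k. ennreal (pmf p k * y ^ k))"
    unfolding GF_def nn_integral_measure_pmf nn_integral_count_space_nat
    by (simp add: ennreal_mult assms)
  have "(\<Sum>k. ennreal (pmf p k * y ^ k)) \<noteq> top"
    using GF_le1[OF assms, of p] eq by (auto simp: top_unique)
  then have "summable (\<lambda>k. pmf p k * y ^ k)"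
    by (intro summable_suminf_not_top) (auto simp: assms)
  then show ?thesis unfolding eq by (intro suminf_ennreal2) (auto simp: assms)
qed

lemma GF_zero: "GF p 0 = ennreal (pmf p 0)"
proof -
  have "GF p 0 = (\<integral>\<^sup>+ k. indicator {0} k \<partial>measure_pmf p)"
    unfolding GF_def by (intro nn_integral_cong) (auto simp: indicator_def)
  then show ?thesis by (simp add: emeasure_pmf_single)
qed

definition S :: "real \<Rightarrow> real" where "S y = sqrt ((9 - y) / (1 - y))"
definition Sinv :: "real \<Rightarrow> real" where "Sinv t = 1 - 8 / (t^2 - 1)"

lemma S_ge3: assumes "0 \<le> y" "y < 1" shows "S y \<ge> 3"
proof -
  have "(9 - y) / (1 - y) \<ge> 9" using assms by (simp add: field_simps)
  then have "sqrt ((9 - y) / (1 - y)) \<ge> sqrt 9" by (rule real_sqrt_le_mono)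
  moreover have "sqrt 9 = (3::real)" by (simp add: real_sqrt_eq_iff)
  ultimately show ?thesis by (simp add: S_def)
qed

lemma Sinv_range: assumes "t \<ge> 3" shows "0 \<le> Sinv t" "Sinv t < 1"
proof -
  have "t^2 \<ge> 9" using power_mono[of 3 t 2] assms by simp
  then show "0 \<le> Sinv t" "Sinv t < 1" by (auto simp: Sinv_def field_simps)
qed

lemma S_Sinv: assumes "t \<ge> 3" shows "S (Sinv t) = t"
proof -
  have t2: "t^2 \<ge> 9" using power_mono[of 3 t 2] assms by simp
  have "(9 - Sinv t) / (1 - Sinv t) = t^2"
    using t2 by (simp add: Sinv_def field_simps)
  then show ?thesis using assms by (simp add: S_def)
qed

lemma g_theta_eq: "g_theta y = Sinv (S y + 2)"
  by (simp add: g_theta_def Sinv_def S_def)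

lemma GF_gw:
  assumes gen: "\<And>y::real. 0 \<le> y \<Longrightarrow> y < 1 \<Longrightarrow> (\<Sum>k. pmf \<theta> k * y ^ k) = g_theta y"
  shows "0 \<le> y \<Longrightarrow> y < 1 \<Longrightarrow> GF (gw_law \<theta> n) y = ennreal (Sinv (S y + 2 * real n))"
proof (induction n arbitrary: y)
  case 0
  have "GF (gw_law \<theta> 0) y = ennreal y" by (simp add: GF_def)
  moreover have "Sinv (S y) = y"
    using 0 by (simp add: Sinv_def S_def field_simps)
  ultimately show ?case by simp
next
  case (Suc n)
  have th: "GF \<theta> y = ennreal (g_theta y)"
    using GF_sum[of y \<theta>] gen[of y] Suc.prems by simp
  have S3: "S y \<ge> 3" using S_ge3 Suc.prems by simp
  have r: "0 \<le> g_theta y" "g_theta y < 1" using Sinv_range[of "S y + 2"] S3 by (auto simp: g_theta_eq)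
  have "GF (gw_law \<theta> (Suc n)) y = GF (gw_law \<theta> n) (g_theta y)"
    using GF_bind[OF Suc.prems(1) th r(1)] by simp
  also have "\<dots> = ennreal (Sinv (S (g_theta y) + 2 * real n))"
    using Suc.IH r by simp
  also have "S (g_theta y) = S y + 2" unfolding g_theta_eq using S3 by (intro S_Sinv) simp
  finally show ?case by (simp add: algebra_simps)
qed



lemma cond_integral_pow:
  fixes p :: "nat pmf" and y :: real
  assumes ne: "set_pmf p \<inter> {k. k \<noteq> 0} \<noteq> {}" and y: "0 \<le> y" "y \<le> 1"
  shows "(\<integral>k. y ^ k \<partial>measure_pmf (cond_pmf p {k. k \<noteq> 0}))
       = (enn2real (GF p y) - pmf p 0) / measure_pmf.prob p {k. k \<noteq> 0}"
proof -
  let ?A = "{k::nat. k \<noteq> 0}"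
  let ?P = "measure_pmf.prob p ?A"
  have Ppos: "?P > 0" using ne by (auto intro: measure_pmf_posI)
  have split: "GF p y = (\<integral>\<^sup>+ k. ennreal (y ^ k) * indicator ?A k \<partial>p) + ennreal (pmf p 0)"
  proof -
    have "GF p y = (\<integral>\<^sup>+ k. ennreal (y ^ k) * indicator ?A k + indicator {0} k \<partial>p)"
      unfolding GF_def by (intro nn_integral_cong) (auto simp: indicator_def)
    also have "\<dots> = (\<integral>\<^sup>+ k. ennreal (y ^ k) * indicator ?A k \<partial>p) + (\<integral>\<^sup>+ k. indicator {0} k \<partial>p)"
      by (intro nn_integral_add) auto
    finally show ?thesis by (simp add: emeasure_pmf_single)
  qed
  define X where "X = (\<integral>\<^sup>+ k. ennreal (y ^ k) * indicator ?A k \<partial>p)"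
  have "X \<le> GF p y" using split X_def by simp
  then have Xfin: "X < top" using GF_le1[OF y, of p] by (meson ennreal_one_less_top order_le_less_trans order_trans)
  have eqr: "enn2real (GF p y) = enn2real X + pmf p 0"
    using split Xfin unfolding X_def[symmetric] by (simp add: enn2real_plus less_top)
  have "(\<integral>k. y ^ k \<partial>measure_pmf (cond_pmf p ?A))
        = enn2real (\<integral>\<^sup>+ k. ennreal (y ^ k) \<partial>measure_pmf (cond_pmf p ?A))"
    by (intro integral_eq_nn_integral) (auto simp: y)
  also have "(\<integral>\<^sup>+ k. ennreal (y ^ k) \<partial>measure_pmf (cond_pmf p ?A)) = X / emeasure p ?A"
    unfolding cond_pmf.rep_eq[OF ne] X_def by (subst nn_integral_uniform_measure) auto
  also have "emeasure p ?A = ennreal ?P" by (simp add: measure_pmf.emeasure_eq_measure)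
  also have "enn2real (X / ennreal ?P) = enn2real X / ?P"
  proof -
    obtain x where x: "X = ennreal x" "0 \<le> x" using Xfin by (cases X rule: ennreal_cases) auto
    show ?thesis using Ppos x by (simp add: divide_ennreal)
  qed
  finally show ?thesis using eqr by simp
qed



definition Fn :: "nat \<Rightarrow> real \<Rightarrow> real" where
  "Fn n s = 1 - 8 / ((S (exp (- s / (real n)^2)) + 2 * real n)^2 - 1) * ((real n + 1) * (real n + 2) / 2)"

context
  fixes \<theta> :: "nat pmf"
  assumes gen: "\<And>y::real. 0 \<le> y \<Longrightarrow> y < 1 \<Longrightarrow> (\<Sum>k. pmf \<theta> k * y ^ k) = g_theta y"
begin

lemma S0: "S 0 = 3"
  by (simp add: S_def real_sqrt_eq_iff)

lemma pmf_gw0: "pmf (gw_law \<theta> n) 0 = 1 - 2 / ((real n + 1) * (real n + 2))"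
proof -
  have "ennreal (pmf (gw_law \<theta> n) 0) = ennreal (Sinv (3 + 2 * real n))"
    using GF_zero[of "gw_law \<theta> n"] GF_gw[OF gen, of 0 n] by (simp add: S0)
  then have "pmf (gw_law \<theta> n) 0 = Sinv (3 + 2 * real n)"
    using Sinv_range[of "3 + 2 * real n"] by (simp add: ennreal_inj)
  also have "\<dots> = 1 - 2 / ((real n + 1) * (real n + 2))"
  proof -
    have "(3 + 2 * real n)^2 - 1 = 4 * ((real n + 1) * (real n + 2))"
      by (simp add: power2_eq_square algebra_simps)
    then show ?thesis by (simp add: Sinv_def)
  qed
  finally show ?thesis .
qed

lemma surv: "measure_pmf.prob (gw_law \<theta> n) {k. k \<noteq> 0} = 2 / ((real n + 1) * (real n + 2))"
proof -
  have "measure_pmf.prob (gw_law \<theta> n) (UNIV - {0}) = 1 - pmf (gw_law \<theta> n) 0"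
    using measure_pmf.prob_compl[of "{0}" "gw_law \<theta> n"] by (simp add: measure_pmf_single)
  moreover have "{k::nat. k \<noteq> 0} = UNIV - {0}" by auto
  ultimately have "measure_pmf.prob (gw_law \<theta> n) {k. k \<noteq> 0} = 1 - pmf (gw_law \<theta> n) 0"
    by simp
  then show ?thesis by (simp add: pmf_gw0)
qed

lemma surv_pos: "measure_pmf.prob (gw_law \<theta> n) {k. k \<noteq> 0} > 0"
  unfolding surv by simp

lemma ne: "set_pmf (gw_law \<theta> n) \<inter> {k. k \<noteq> 0} \<noteq> {}"
  using surv_pos[of n] by (auto simp: measure_pmf_zero_iff[symmetric])

definition \<mu>n :: "nat \<Rightarrow> real measure" where
  "\<mu>n n = distr (measure_pmf (cond_pmf (gw_law \<theta> n) {k. k \<noteq> 0})) borel (\<lambda>k. real k / (real n)^2)"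

lemma \<mu>n_real: "real_distribution (\<mu>n n)"
  unfolding \<mu>n_def by (intro prob_space.real_distribution_distr prob_space_measure_pmf) simp

lemma \<mu>n_integral: "(\<integral>x. f x \<partial>\<mu>n n) = (\<integral>k. f (real k / (real n)^2) \<partial>measure_pmf (cond_pmf (gw_law \<theta> n) {k. k \<noteq> 0}))"
  if [measurable]: "(f :: real \<Rightarrow> real) \<in> borel_measurable borel"
  unfolding \<mu>n_def by (rule integral_distr) (auto simp: that)

lemma \<mu>n_AE: "AE x in \<mu>n n. 0 \<le> x"
  unfolding \<mu>n_def by (subst AE_distr_iff) auto

lemma laplace_0: "(\<integral>x. exp (- s * x) \<partial>\<mu>n 0) = 1"
  by (simp add: \<mu>n_integral)


lemma laplace_n:
  assumes "n \<ge> 1" "s > 0"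
  shows "(\<integral>x. exp (- s * x) \<partial>\<mu>n n) = Fn n s"
proof -
  define y where "y = exp (- s / (real n)^2)"
  have y: "0 \<le> y" "y < 1" using assms by (auto simp: y_def)
  have "(\<integral>x. exp (- s * x) \<partial>\<mu>n n) = (\<integral>k. y ^ k \<partial>measure_pmf (cond_pmf (gw_law \<theta> n) {k. k \<noteq> 0}))"
    by (simp add: \<mu>n_integral y_def exp_of_nat_mult[symmetric] mult.commute)
  also have "\<dots> = (enn2real (GF (gw_law \<theta> n) y) - pmf (gw_law \<theta> n) 0) / measure_pmf.prob (gw_law \<theta> n) {k. k \<noteq> 0}"
    using y by (intro cond_integral_pow ne) auto
  also have "enn2real (GF (gw_law \<theta> n) y) = Sinv (S y + 2 * real n)"
    using GF_gw[OF gen y] Sinv_range[of "S y + 2 * real n"] S_ge3[OF y] by simp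
  finally have eq: "(\<integral>x. exp (- s * x) \<partial>\<mu>n n) = (Sinv (S y + 2 * real n) - pmf (gw_law \<theta> n) 0) / measure_pmf.prob (gw_law \<theta> n) {k. k \<noteq> 0}" .
  have t: "(S y + 2 * real n)^2 - 1 > 0"
    using S_ge3[OF y] power_mono[of 3 "S y + 2 * real n" 2] by simp
  define D where "D = (S y + 2 * real n)^2 - 1"
  define Q where "Q = (real n + 1) * (real n + 2)"
  have Q: "Q > 0" by (simp add: Q_def)
  have "(Sinv (S y + 2 * real n) - pmf (gw_law \<theta> n) 0) / measure_pmf.prob (gw_law \<theta> n) {k. k \<noteq> 0}
     = (1 - 8 / D - (1 - 2 / Q)) / (2 / Q)"
    unfolding surv pmf_gw0 Sinv_def D_def Q_def by simp
  also have "\<dots> = 1 - 8 / D * (Q / 2)"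
    using Q by (simp add: field_simps)
  finally show ?thesis unfolding eq Fn_def y_def[symmetric] D_def Q_def .
qed

end


lemma S_sq: assumes "0 \<le> y" "y < 1" shows "(S y)^2 = 1 + 8 / (1 - y)"
  using assms by (simp add: S_def field_simps)

lemma Fn_bound:
  assumes n: "n \<ge> 1" and s: "s > 0"
  shows "1 - Fn n s \<le> 3 * s"
proof -
  define y where "y = exp (- s / (real n)^2)"
  have y: "0 \<le> y" "y < 1" using assms by (auto simp: y_def)
  have n2: "(real n)^2 \<ge> 1" using n by simp
  have "1 - y \<le> s / (real n)^2"
    using exp_ge_add_one_self[of "- s / (real n)^2"] by (simp add: y_def)
  moreover have "1 - y > 0" using y by simp
  ultimately have "8 / (1 - y) \<ge> 8 / (s / (real n)^2)"
    by (intro divide_left_mono) (use s n2 y n in \<open>auto intro!: divide_pos_pos mult_pos_pos\<close>)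
  then have Sg: "(S y)^2 \<ge> 8 * (real n)^2 / s" using S_sq[OF y] by simp
  have S0: "S y \<ge> 0" using S_ge3[OF y] by simp
  define D where "D = (S y + 2 * real n)^2 - 1"
  have "D = (S y)^2 + 4 * real n * S y + (4 * (real n)^2 - 1)"
    by (simp add: D_def power2_eq_square algebra_simps)
  moreover have "4 * real n * S y \<ge> 0" using S0 by simp
  moreover have "4 * (real n)^2 - 1 \<ge> 0" using n2 by simp
  ultimately have D: "D \<ge> 8 * (real n)^2 / s" using Sg by linarith
  have Dpos: "8 * (real n)^2 / s > 0" using s n by simp
  define Q where "Q = (real n + 1) * (real n + 2)"
  have nn: "real n * 1 \<le> real n * real n" using n by (intro mult_left_mono) auto
  have Qe: "Q = real n * real n + 3 * real n + 2" by (simp add: Q_def algebra_simps)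
  have Q: "Q \<le> 6 * (real n)^2" "Q \<ge> 0" unfolding Qe power2_eq_square using n nn by linarith+
  have "1 - Fn n s = 8 / D * (Q / 2)"
    by (simp add: Fn_def D_def Q_def y_def)
  also have "\<dots> \<le> 8 / (8 * (real n)^2 / s) * (6 * (real n)^2 / 2)"
  proof (rule mult_mono)
    have "0 < D * (8 * (real n)^2 / s)" using D Dpos by (intro mult_pos_pos) auto
    then show "8 / D \<le> 8 / (8 * (real n)^2 / s)" using D by (intro divide_left_mono) auto
    show "Q / 2 \<le> 6 * (real n)^2 / 2" using Q by simp
    show "0 \<le> 8 / (8 * (real n)^2 / s)" using s by simp
    show "0 \<le> Q / 2" using Q by simp
  qed
  also have "\<dots> = 3 * s" using s n by (simp add: field_simps)
  finally show ?thesis .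
qed

lemma inv_lim: "(\<lambda>n. c / real n) \<longlonglongrightarrow> (0::real)"
  by real_asymp

lemma inv_lim2: "(\<lambda>n. c / (real n)^2) \<longlonglongrightarrow> (0::real)"
  by real_asymp

lemma Fn_lim:
  assumes s: "s > 0"
  shows "(\<lambda>n. Fn n s) \<longlonglongrightarrow> 1 - (1 + sqrt (2 / s)) powr (-2)"
proof -
  define a where "a n = S (exp (- s / (real n)^2)) / real n" for n
  have a: "a \<longlonglongrightarrow> (8 * inverse s) powr (1/2)"
    unfolding a_def S_def using s by real_asymp
  have c: "(8 * inverse s) powr (1/2) = 2 * sqrt (2 / s)"
  proof -
    have "(8 * inverse s) powr (1/2) = sqrt (8 / s)"
      using s by (simp add: powr_half_sqrt field_simps)
    also have "8 / s = 2^2 * (2 / s)" by simp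
    also have "sqrt (2^2 * (2 / s)) = sqrt (2^2) * sqrt (2 / s)" by (rule real_sqrt_mult)
    also have "sqrt ((2::real)^2) = 2" by simp
    finally show ?thesis .
  qed
  have ev: "eventually (\<lambda>n. Fn n s = 1 - 4 * ((1 + 1 / real n) * (1 + 2 / real n)) / ((a n + 2)^2 - 1 / (real n)^2)) sequentially"
    using eventually_ge_at_top[of 1]
  proof eventually_elim
    case (elim n)
    then have x: "real n > 0" by simp
    define T where "T = S (exp (- s / (real n)^2))"
    have T: "T \<ge> 3" unfolding T_def by (intro S_ge3) (use s x in auto)
    have D: "(T + 2 * real n)^2 - 1 > 0" using T power_mono[of 3 "T + 2 * real n" 2] x by simp
    have e1: "(1 + 1 / real n) * (1 + 2 / real n) = (real n + 1) * (real n + 2) / (real n)^2"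
      using x by (simp add: field_simps power2_eq_square)
    have e2: "(T / real n + 2)^2 - 1 / (real n)^2 = ((T + 2 * real n)^2 - 1) / (real n)^2"
      using x by (simp add: field_simps power2_eq_square)
    have "4 * ((real n + 1) * (real n + 2) / (real n)^2) / (((T + 2 * real n)^2 - 1) / (real n)^2)
        = 8 / ((T + 2 * real n)^2 - 1) * ((real n + 1) * (real n + 2) / 2)"
      using x D by (simp add: field_simps)
    note eq = this
    show ?case unfolding a_def T_def[symmetric] e1 e2 eq by (simp only: Fn_def T_def)
  qed
  have sq0: "sqrt (2 / s) \<ge> 0" using s by simp
  have nz: "2 * sqrt (2 / s) + 2 \<noteq> 0" using sq0 by linarith
  have lim: "(\<lambda>n. 1 - 4 * ((1 + 1 / real n) * (1 + 2 / real n)) / ((a n + 2)^2 - 1 / (real n)^2))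
     \<longlonglongrightarrow> 1 - 4 * ((1 + 0) * (1 + 2 * 0)) / ((2 * sqrt (2 / s) + 2)^2 - 0)"
    using a real_sqrt_ge_zero[of "2/s"] unfolding c
    by (intro tendsto_intros inv_lim inv_lim2) (use s nz inv_lim[of 2] in auto)
  have "1 - 4 * ((1 + 0) * (1 + 2 * 0)) / ((2 * sqrt (2 / s) + 2)^2 - 0) = 1 - (1 + sqrt (2 / s)) powr (-2)"
  proof -
    have "(2 * sqrt (2 / s) + 2)^2 = 4 * (1 + sqrt (2 / s))^2" by (simp add: power2_eq_square algebra_simps)
    moreover have "(1 + sqrt (2 / s)) powr (-2) = 1 / (1 + sqrt (2 / s))^2"
      unfolding powr_minus_divide using sq0 by (subst powr_numeral) auto
    ultimately show ?thesis by simp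
  qed
  with lim have "(\<lambda>n. 1 - 4 * ((1 + 1 / real n) * (1 + 2 / real n)) / ((a n + 2)^2 - 1 / (real n)^2))
     \<longlonglongrightarrow> 1 - (1 + sqrt (2 / s)) powr (-2)" by simp
  then show ?thesis using tendsto_cong[OF ev] by simp
qed

lemma asymp: "(\<lambda>r::nat. 2 / ((real r + 1) * (real r + 2))) \<sim>[at_top] (\<lambda>r. 2 / (real r)^2)"
  by real_asymp



lemma laplace_poly_eq:
  fixes M1 M2 :: "real measure" and h :: "real \<Rightarrow> real"
  assumes M1: "real_distribution M1" and M2: "real_distribution M2"
    and AE1: "AE x in M1. 0 \<le> x" and AE2: "AE x in M2. 0 \<le> x"
    and L: "\<And>k::nat. k \<ge> 1 \<Longrightarrow> (\<integral>x. exp (- real k * x) \<partial>M1) = (\<integral>x. exp (- real k * x) \<partial>M2)"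
    and hc: "continuous_on UNIV h" and hb: "\<And>x. \<bar>h x\<bar> \<le> 1" and h0: "\<And>x. x \<ge> b \<Longrightarrow> h x = 0"
  shows "(\<integral>x. h x \<partial>M1) = (\<integral>x. h x \<partial>M2)"
proof -
  interpret M1: real_distribution M1 by fact
  interpret M2: real_distribution M2 by fact
  have hm[measurable]: "h \<in> borel_measurable borel" using hc by (rule borel_measurable_continuous_onI)
  define c where "c = exp (- (max b 0) - 1)"
  have c: "0 < c" "c \<le> 1" by (auto simp: c_def)
  define f where "f t = h (- ln (max t c))" for t
  have fc: "continuous_on {0..1} f"
  proof -
    have "continuous_on {0..1} (\<lambda>t. - ln (max t c))"
      using c by (intro continuous_intros) auto
    then show ?thesis unfolding f_def
      by (rule continuous_on_compose2[OF hc]) auto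
  qed
  have fe: "f (exp (- x)) = h x" if "0 \<le> x" for x
  proof (cases "exp (- x) \<ge> c")
    case True then show ?thesis by (simp add: f_def max_def)
  next
    case False
    then have "exp (- x) < c" by simp
    then have "- x < - (max b 0) - 1" unfolding c_def by simp
    then have "x \<ge> b" by simp
    moreover have "max (exp (- x)) c = c" using False by simp
    moreover have "- ln c \<ge> b" by (simp add: c_def)
    ultimately show ?thesis by (simp add: f_def h0)
  qed
  have key: "\<bar>(\<integral>x. h x \<partial>M1) - (\<integral>x. h x \<partial>M2)\<bar> \<le> 2 * e" if e: "e > 0" for e
  proof -
    obtain g where gp: "real_polynomial_function g" and gf: "\<And>t. t \<in> {0..1} \<Longrightarrow> \<bar>f t - g t\<bar> < e"
      using Stone_Weierstrass_real_polynomial_function[OF compact_Icc fc e] by blast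
    obtain A N where gA: "g = (\<lambda>t. \<Sum>i\<le>N. A i * t ^ i)"
      using gp real_polynomial_function_iff_sum by blast
    have gcont: "continuous_on UNIV g" using gp
      by (simp add: continuous_on_polymonial_function real_polynomial_function_eq)
    have gm[measurable]: "g \<in> borel_measurable borel" using gcont by (rule borel_measurable_continuous_onI)
    have close: "\<bar>h x - g (exp (- x))\<bar> < e" if "0 \<le> x" for x
      using gf[of "exp (- x)"] fe[OF that] that by simp
    have gbd: "\<bar>g (exp (- x))\<bar> \<le> 1 + e" if "0 \<le> x" for x
      using close[OF that] hb[of x] by linarith
    have est: "\<bar>(\<integral>x. h x \<partial>M) - (\<integral>x. g (exp (- x)) \<partial>M)\<bar> \<le> e"
      if "real_distribution M" "AE x in M. 0 \<le> x" for M
    proof -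
      interpret M: real_distribution M by fact
      have ih: "integrable M h" by (rule M.integrable_const_bound[where B=1]) (auto simp: hb)
      have ig: "integrable M (\<lambda>x. g (exp (- x)))"
        by (rule M.integrable_const_bound[where B="1 + e"]) (use that(2) gbd in \<open>auto elim: eventually_mono\<close>)
      have "\<bar>(\<integral>x. h x - g (exp (- x)) \<partial>M)\<bar> \<le> (\<integral>x. \<bar>h x - g (exp (- x))\<bar> \<partial>M)"
        by (rule integral_abs_bound)
      also have "\<dots> \<le> (\<integral>x. e \<partial>M)"
        by (rule integral_mono_AE) (use ih ig that(2) close in \<open>auto elim: eventually_mono intro: less_imp_le\<close>)
      also have "\<dots> = e" using M.prob_space M.space_eq_univ by simp
      finally show ?thesis using ih ig by simp
    qed
    have same: "(\<integral>x. g (exp (- x)) \<partial>M1) = (\<integral>x. g (exp (- x)) \<partial>M2)"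
    proof -
      have eqint: "(\<integral>x. g (exp (- x)) \<partial>M) = (\<Sum>i\<le>N. A i * (\<integral>x. exp (- real i * x) \<partial>M))"
        if "real_distribution M" "AE x in M. 0 \<le> x" for M
      proof -
        interpret M: real_distribution M by fact
        have ii: "integrable M (\<lambda>x. exp (- real i * x))" for i
          by (rule M.integrable_const_bound[where B=1]) (use that(2) in \<open>auto elim!: eventually_mono\<close>)
        have "(\<integral>x. g (exp (- x)) \<partial>M) = (\<integral>x. (\<Sum>i\<le>N. A i * exp (- real i * x)) \<partial>M)"
          unfolding gA by (simp add: exp_of_nat_mult[symmetric])
        also have "\<dots> = (\<Sum>i\<le>N. A i * (\<integral>x. exp (- real i * x) \<partial>M))"
          using ii by (simp add: integral_sum)
        finally show ?thesis .
      qed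
      have "(\<integral>x. exp (- real i * x) \<partial>M1) = (\<integral>x. exp (- real i * x) \<partial>M2)" for i
      proof (cases "i = 0")
        case True then show ?thesis using M1.prob_space M2.prob_space M1.space_eq_univ M2.space_eq_univ by simp
      next
        case False then show ?thesis by (intro L) simp
      qed
      then show ?thesis using eqint[OF M1 AE1] eqint[OF M2 AE2] by simp
    qed
    show ?thesis using est[OF M1 AE1] est[OF M2 AE2] same by linarith
  qed
  show ?thesis
  proof (rule ccontr)
    assume ne: "(\<integral>x. h x \<partial>M1) \<noteq> (\<integral>x. h x \<partial>M2)"
    define d where "d = \<bar>(\<integral>x. h x \<partial>M1) - (\<integral>x. h x \<partial>M2)\<bar>"
    have "d > 0" using ne by (simp add: d_def)
    then show False using key[of "d / 4"] unfolding d_def[symmetric] by simp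
  qed
qed



lemma cts_step_cont: "a < b \<Longrightarrow> continuous_on UNIV (cts_step a b)"
  by (rule uniformly_continuous_imp_continuous[OF cts_step_uniformly_continuous])

lemma cts_step_bd: "a < b \<Longrightarrow> \<bar>cts_step a b x\<bar> \<le> 1"
  by (auto simp: cts_step_def field_simps)

lemma cts_step_zero: "a < b \<Longrightarrow> z \<ge> b \<Longrightarrow> cts_step a b z = 0"
  by (auto simp: cts_step_def)

lemma right_cont_le:
  fixes F :: "real \<Rightarrow> real"
  assumes "continuous (at_right x) F" "\<And>y. y > x \<Longrightarrow> c \<le> F y"
  shows "c \<le> F x"
proof -
  have lim: "(F \<longlongrightarrow> F x) (at_right x)" using assms(1) by (simp add: continuous_within)
  have ev: "eventually (\<lambda>y. c \<le> F y) (at_right x)"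
    by (simp add: eventually_at_right_less assms(2) eventually_mono[OF eventually_at_right_less])
  show ?thesis by (rule tendsto_le[OF trivial_limit_at_right_real lim tendsto_const ev])
qed

lemma laplace_unique:
  fixes M1 M2 :: "real measure"
  assumes M1: "real_distribution M1" and M2: "real_distribution M2"
    and AE1: "AE x in M1. 0 \<le> x" and AE2: "AE x in M2. 0 \<le> x"
    and L: "\<And>k::nat. k \<ge> 1 \<Longrightarrow> (\<integral>x. exp (- real k * x) \<partial>M1) = (\<integral>x. exp (- real k * x) \<partial>M2)"
  shows "M1 = M2"
proof -
  interpret M1: real_distribution M1 by fact
  interpret M2: real_distribution M2 by fact
  have I: "(\<integral>z. cts_step x y z \<partial>M1) = (\<integral>z. cts_step x y z \<partial>M2)" if "x < y" for x y
    by (rule laplace_poly_eq[OF M1 M2 AE1 AE2 L, where b = y])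
       (use that cts_step_cont cts_step_bd cts_step_zero in auto)
  have le: "cdf N1 x \<le> cdf N2 x"
    if N: "real_distribution N1" "real_distribution N2"
      and IN: "\<And>x y. x < y \<Longrightarrow> (\<integral>z. cts_step x y z \<partial>N1) = (\<integral>z. cts_step x y z \<partial>N2)" for N1 N2 x
  proof (rule right_cont_le[where F="cdf N2"])
    show "continuous (at_right x) (cdf N2)" by (rule finite_borel_measure.cdf_is_right_cont[OF real_distribution.finite_borel_measure_M[OF N(2)]])
    fix y assume "x < y"
    have "cdf N1 x \<le> (\<integral>z. cts_step x y z \<partial>N1)"
      using real_distribution.cdf_cts_step(1)[OF N(1) \<open>x < y\<close>] by simp
    also have "\<dots> = (\<integral>z. cts_step x y z \<partial>N2)" using IN[OF \<open>x < y\<close>] .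
    also have "\<dots> \<le> cdf N2 y"
      using real_distribution.cdf_cts_step(2)[OF N(2) \<open>x < y\<close>] by simp
    finally show "cdf N1 x \<le> cdf N2 y" .
  qed
  have "cdf M1 = cdf M2"
  proof
    fix x
    show "cdf M1 x = cdf M2 x"
      using le[OF M1 M2 I, of x] le[OF M2 M1 I[symmetric], of x] by simp
  qed
  then show ?thesis by (rule cdf_unique[OF M1 M2])
qed

lemma tail_bound:
  fixes M :: "real measure"
  assumes M: "real_distribution M" and AE: "AE x in M. 0 \<le> x" and s: "s > 0"
  shows "measure M {b<..} * (1 - exp (- s * b)) \<le> 1 - (\<integral>x. exp (- s * x) \<partial>M)"
proof -
  interpret real_distribution M by fact
  have ie: "integrable M (\<lambda>x. exp (- s * x))"
    by (rule integrable_const_bound[where B=1]) (use AE s in \<open>auto elim!: eventually_mono\<close>)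
  have ii: "integrable M (\<lambda>x. (1 - exp (- s * b)) * indicator {b<..} x)"
    by (rule integrable_const_bound[where B="\<bar>1 - exp (- s * b)\<bar>"]) (auto simp: indicator_def)
  have "measure M {b<..} * (1 - exp (- s * b)) = (\<integral>x. (1 - exp (- s * b)) * indicator {b<..} x \<partial>M)"
    by simp
  also have "\<dots> \<le> (\<integral>x. 1 - exp (- s * x) \<partial>M)"
  proof (rule integral_mono_AE[OF ii])
    show "integrable M (\<lambda>x. 1 - exp (- s * x))" using ie by simp
    show "AE x in M. (1 - exp (- s * b)) * indicator {b<..} x \<le> 1 - exp (- s * x)"
      using AE
    proof eventually_elim
      case (elim x)
      show ?case
      proof (cases "x > b")
        case True
        then have "exp (- s * x) \<le> exp (- s * b)" using s by simp
        then show ?thesis using True by simp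
      next
        case False
        have "exp (- s * x) \<le> 1" using elim s by simp
        then show ?thesis using False by simp
      qed
    qed
  qed
  also have "\<dots> = 1 - (\<integral>x. exp (- s * x) \<partial>M)"
    using ie prob_space space_eq_univ by simp
  finally show ?thesis .
qed



definition Lap :: "real \<Rightarrow> real" where "Lap s = 1 - (1 + sqrt (2 / s)) powr (-2)"

context
  fixes \<theta> :: "nat pmf"
  assumes gen: "\<And>y::real. 0 \<le> y \<Longrightarrow> y < 1 \<Longrightarrow> (\<Sum>k. pmf \<theta> k * y ^ k) = g_theta y"
begin

lemma LT_lim: "s > 0 \<Longrightarrow> (\<lambda>n. \<integral>x. exp (- s * x) \<partial>\<mu>n \<theta> n) \<longlonglongrightarrow> Lap s"
proof -
  assume s: "s > 0"
  have "eventually (\<lambda>n. Fn n s = (\<integral>x. exp (- s * x) \<partial>\<mu>n \<theta> n)) sequentially"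
    using eventually_ge_at_top[of 1] by eventually_elim (use laplace_n[OF gen _ s] in auto)
  then show ?thesis using Fn_lim[OF s] tendsto_cong by (fastforce simp: Lap_def)
qed

lemma LT_bound: "s > 0 \<Longrightarrow> 1 - (\<integral>x. exp (- s * x) \<partial>\<mu>n \<theta> n) \<le> 3 * s"
proof -
  assume s: "s > 0"
  show ?thesis
  proof (cases "n = 0")
    case True then show ?thesis using s laplace_0[OF gen, of s] by simp
  next
    case False then show ?thesis using s laplace_n[OF gen, of n s] Fn_bound[of n s] by simp
  qed
qed

lemma AE_neg0:
  assumes "real_distribution M" "AE x in M. 0 \<le> x"
  shows "measure M {..<0} = 0"
proof -
  interpret real_distribution M by fact
  have "emeasure M {..<0} = 0"
    using assms(2) by (subst (asm) AE_iff_measurable[where N="{..<0}"]) auto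
  then show ?thesis by (simp add: emeasure_eq_measure)
qed

lemma tight_mu: "tight (\<mu>n \<theta>)"
  unfolding tight_def
proof (intro conjI allI impI)
  show "real_distribution (\<mu>n \<theta> n)" for n by (rule \<mu>n_real[OF gen])
  fix \<epsilon> :: real assume e: "\<epsilon> > 0"
  define s where "s = \<epsilon> / 12"
  define b where "b = 2 / s"
  have s: "s > 0" using e by (simp add: s_def)
  have sb: "s * b = 2" using s by (simp add: b_def)
  have e2: "exp (- 2) \<le> (1/2::real)"
  proof -
    have "exp (2::real) \<ge> 2 + 1" using exp_ge_add_one_self[of 2] by simp
    then have "exp (- 2::real) \<le> 1 / 3" by (simp add: exp_minus field_simps)
    then show ?thesis by simp
  qed
  show "\<exists>a b. a < b \<and> (\<forall>n. 1 - \<epsilon> < measure (\<mu>n \<theta> n) {a<..b})"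
  proof (rule exI[of _ "-1::real"], rule exI[of _ b], intro conjI allI)
    have "0 < b" using s by (simp add: b_def)
    then show "-1 < b" by simp
    fix n
    interpret M: real_distribution "\<mu>n \<theta> n" by (rule \<mu>n_real[OF gen])
    have t: "measure (\<mu>n \<theta> n) {b<..} * (1 - exp (- s * b)) \<le> 1 - (\<integral>x. exp (- s * x) \<partial>\<mu>n \<theta> n)"
      by (rule tail_bound[OF \<mu>n_real[OF gen] \<mu>n_AE[OF gen] s])
    have "measure (\<mu>n \<theta> n) {b<..} * (1/2) \<le> measure (\<mu>n \<theta> n) {b<..} * (1 - exp (- s * b))"
      using e2 sb by (intro mult_left_mono) auto
    then have tb: "measure (\<mu>n \<theta> n) {b<..} \<le> 6 * s"
      using t LT_bound[OF s, of n] by simp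
    have neg: "measure (\<mu>n \<theta> n) {..-1} = 0"
    proof -
      have "measure (\<mu>n \<theta> n) {..-1} \<le> measure (\<mu>n \<theta> n) {..<0}"
        by (intro M.finite_measure_mono) auto
      then show ?thesis using AE_neg0[OF \<mu>n_real[OF gen] \<mu>n_AE[OF gen]] by (simp add: measure_nonneg antisym)
    qed
    have "1 = measure (\<mu>n \<theta> n) ({..-1} \<union> {-1<..b} \<union> {b<..})"
    proof -
      have "{..-1} \<union> {-1<..b} \<union> {b<..} = UNIV" by auto
      then show ?thesis using M.prob_space M.space_eq_univ by simp
    qed
    also have "\<dots> \<le> measure (\<mu>n \<theta> n) ({..-1} \<union> {-1<..b}) + measure (\<mu>n \<theta> n) {b<..}"
      by (intro measure_Un_le) auto
    also have "\<dots> \<le> measure (\<mu>n \<theta> n) {..-1} + measure (\<mu>n \<theta> n) {-1<..b} + measure (\<mu>n \<theta> n) {b<..}"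
      using measure_Un_le[of "{..-1}" "\<mu>n \<theta> n" "{-1<..b}"] by auto
    finally show "1 - \<epsilon> < measure (\<mu>n \<theta> n) {-1<..b}"
      using neg tb e by (simp add: s_def)
  qed
qed

end


context
  fixes \<theta> :: "nat pmf"
  assumes gen: "\<And>y::real. 0 \<le> y \<Longrightarrow> y < 1 \<Longrightarrow> (\<Sum>k. pmf \<theta> k * y ^ k) = g_theta y"
begin

lemma limit_props:
  assumes \<sigma>: "strict_mono \<sigma>" and \<nu>: "real_distribution \<nu>" and wc: "weak_conv_m (\<mu>n \<theta> \<circ> \<sigma>) \<nu>"
  shows "(AE x in \<nu>. 0 \<le> x) \<and> (\<forall>s>0. (\<integral>x. exp (- s * x) \<partial>\<nu>) = Lap s)"
proof -
  interpret N: real_distribution \<nu> by fact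
  have dist: "\<And>n. real_distribution ((\<mu>n \<theta> \<circ> \<sigma>) n)" by (simp add: \<mu>n_real[OF gen])
  note conv = weak_conv_imp_integral_bdd_continuous_conv[OF dist \<nu> wc]
  define f1 where "f1 x = min 1 (max 0 (- x))" for x :: real
  have f1c: "isCont f1 x" for x unfolding f1_def by (intro continuous_intros)
  have f1b: "norm (f1 x) \<le> 1" for x by (auto simp: f1_def)
  have f1m: "f1 \<in> borel_measurable borel"
    using f1c by (intro borel_measurable_continuous_onI continuous_at_imp_continuous_on) auto
  have f1z: "(\<integral>x. f1 x \<partial>\<mu>n \<theta> n) = 0" for n
  proof -
    have f1mn: "f1 \<in> borel_measurable (\<mu>n \<theta> n)"
      using real_distribution.measurable_finite_borel[OF \<mu>n_real[OF gen] f1m] .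
    have "(\<integral>x. f1 x \<partial>\<mu>n \<theta> n) = (\<integral>x. 0 \<partial>\<mu>n \<theta> n)"
      by (rule integral_cong_AE[OF f1mn]) (use \<mu>n_AE[OF gen, of n] in \<open>auto simp: f1_def elim!: eventually_mono\<close>)
    then show ?thesis by simp
  qed
  have "(\<lambda>n. \<integral>x. f1 x \<partial>(\<mu>n \<theta> \<circ> \<sigma>) n) \<longlonglongrightarrow> (\<integral>x. f1 x \<partial>\<nu>)" by (rule conv[OF f1c f1b])
  then have "(\<integral>x. f1 x \<partial>\<nu>) = 0" using f1z by (simp add: LIMSEQ_const_iff)
  moreover have "integrable \<nu> f1"
    by (rule N.integrable_const_bound[where B=1]) (use f1b f1m in auto)
  ultimately have "AE x in \<nu>. f1 x = 0"
    by (subst (asm) integral_nonneg_eq_0_iff_AE) (auto simp: f1_def)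
  then have AE: "AE x in \<nu>. 0 \<le> x"
    by (rule eventually_mono) (auto simp: f1_def min_def max_def split: if_splits)
  have L: "(\<integral>x. exp (- s * x) \<partial>\<nu>) = Lap s" if s: "s > 0" for s
  proof -
    define f2 where "f2 x = exp (- s * max x 0)" for x :: real
    have f2c: "isCont f2 x" for x unfolding f2_def by (intro continuous_intros)
    have f2b: "norm (f2 x) \<le> 1" for x using s by (auto simp: f2_def)
    have f2m: "f2 \<in> borel_measurable borel"
      using f2c by (intro borel_measurable_continuous_onI continuous_at_imp_continuous_on) auto
    have em: "(\<lambda>x. exp (- s * x)) \<in> borel_measurable borel"
      by (intro borel_measurable_continuous_onI continuous_intros)
    have f2e: "(\<integral>x. f2 x \<partial>M) = (\<integral>x. exp (- s * x) \<partial>M)"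
      if "real_distribution M" "AE x in M. 0 \<le> x" for M
    proof -
      have m1: "f2 \<in> borel_measurable M"
        using real_distribution.measurable_finite_borel[OF that(1) f2m] .
      have m2: "(\<lambda>x. exp (- s * x)) \<in> borel_measurable M"
        using real_distribution.measurable_finite_borel[OF that(1) em] .
      show ?thesis
      proof (rule integral_cong_AE[OF m1 m2])
        show "AE x in M. f2 x = exp (- s * x)"
          using that(2) by (rule eventually_mono) (simp add: f2_def max_def)
      qed
    qed
    have "(\<lambda>n. \<integral>x. f2 x \<partial>(\<mu>n \<theta> \<circ> \<sigma>) n) \<longlonglongrightarrow> (\<integral>x. f2 x \<partial>\<nu>)" by (rule conv[OF f2c f2b])
    moreover have "(\<lambda>n. \<integral>x. f2 x \<partial>(\<mu>n \<theta> \<circ> \<sigma>) n) \<longlonglongrightarrow> Lap s"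
      using LIMSEQ_subseq_LIMSEQ[OF LT_lim[OF gen s] \<sigma>]
      by (simp add: comp_def f2e[OF \<mu>n_real[OF gen] \<mu>n_AE[OF gen]])
    ultimately have "(\<integral>x. f2 x \<partial>\<nu>) = Lap s" by (rule LIMSEQ_unique)
    then show ?thesis using f2e[OF \<nu> AE] by simp
  qed
  show ?thesis using AE L by auto
qed

lemma main_conv:
  "\<exists>\<mu>. real_distribution \<mu> \<and> measure \<mu> {0..} = 1
          \<and> (\<forall>s>0. (\<integral>x. exp (- s * x) \<partial>\<mu>) = 1 - (1 + sqrt (2 / s)) powr (-2))
          \<and> weak_conv_m (\<mu>n \<theta>) \<mu>"
proof -
  obtain r M where r: "strict_mono r" and M: "real_distribution M" and wc: "weak_conv_m (\<mu>n \<theta> \<circ> id \<circ> r) M"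
    using tight_imp_convergent_subsubsequence[OF tight_mu[OF gen], of id] by (auto simp: strict_mono_def)
  have "strict_mono (id \<circ> r)" using r by (simp add: strict_mono_def)
  then have P: "(AE x in M. 0 \<le> x) \<and> (\<forall>s>0. (\<integral>x. exp (- s * x) \<partial>M) = Lap s)"
    using limit_props[of "id \<circ> r" M] M wc by (simp add: comp_assoc)
  interpret M: real_distribution M by fact
  have m0: "measure M {0..} = 1"
  proof -
    have "measure M {..<0} = 0" using AE_neg0[OF gen M] P by simp
    moreover have "measure M ({..<0} \<union> {0..}) = 1"
    proof -
      have "{..<0} \<union> {0..} = (UNIV :: real set)" by auto
      then show ?thesis using M.prob_space M.space_eq_univ by simp
    qed
    moreover have "measure M ({..<0} \<union> {0..}) = measure M {..<0} + measure M {0..}"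
      by (intro M.finite_measure_Union) auto
    ultimately show ?thesis by simp
  qed
  have wcall: "weak_conv_m (\<mu>n \<theta>) M"
  proof (rule tight_subseq_weak_converge[OF \<mu>n_real[OF gen] M tight_mu[OF gen]])
    fix s \<nu> assume s: "strict_mono s" and \<nu>: "real_distribution \<nu>" and w: "weak_conv_m (\<mu>n \<theta> \<circ> s) \<nu>"
    have Q: "(AE x in \<nu>. 0 \<le> x) \<and> (\<forall>s>0. (\<integral>x. exp (- s * x) \<partial>\<nu>) = Lap s)"
      by (rule limit_props[OF s \<nu> w])
    have "\<nu> = M"
      by (rule laplace_unique[OF \<nu> M]) (use P Q in auto)
    then show "weak_conv_m (\<mu>n \<theta> \<circ> s) M" using w by simp
  qed
  show ?thesis using M m0 P wcall by (auto simp: Lap_def)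
qed

end

theorem lemma12:
  fixes \<theta> :: "nat pmf"
  assumes gen: "\<And>y::real. 0 \<le> y \<Longrightarrow> y < 1 \<Longrightarrow> (\<Sum>k. pmf \<theta> k * y ^ k) = g_theta y"
  shows "((\<lambda>r. measure_pmf.prob (gw_law \<theta> r) {k. k \<noteq> 0}) \<sim>[at_top] (\<lambda>r. 2 / (real r)^2))
    \<and> (\<exists>\<mu>. real_distribution \<mu> \<and> measure \<mu> {0..} = 1
          \<and> (\<forall>s>0. (\<integral>x. exp (- s * x) \<partial>\<mu>) = 1 - (1 + sqrt (2 / s)) powr (-2))
          \<and> weak_conv_m
              (\<lambda>r. distr (measure_pmf (cond_pmf (gw_law \<theta> r) {k. k \<noteq> 0})) borel
                     (\<lambda>k. real k / (real r)^2))
              \<mu>)"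
proof
  show "(\<lambda>r. measure_pmf.prob (gw_law \<theta> r) {k. k \<noteq> 0}) \<sim>[at_top] (\<lambda>r. 2 / (real r)^2)"
  proof -
    have "(\<lambda>r. measure_pmf.prob (gw_law \<theta> r) {k. k \<noteq> 0}) = (\<lambda>r::nat. 2 / ((real r + 1) * (real r + 2)))"
      by (rule ext) (rule surv[OF gen])
    then show ?thesis using asymp by simp
  qed
  have eq: "\<mu>n \<theta> = (\<lambda>r. distr (measure_pmf (cond_pmf (gw_law \<theta> r) {k. k \<noteq> 0})) borel
                     (\<lambda>k. real k / (real r)^2))"
    by (rule ext) (simp add: \<mu>n_def[OF gen])
  show "\<exists>\<mu>. real_distribution \<mu> \<and> measure \<mu> {0..} = 1
          \<and> (\<forall>s>0. (\<integral>x. exp (- s * x) \<partial>\<mu>) = 1 - (1 + sqrt (2 / s)) powr (-2))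
          \<and> weak_conv_m
              (\<lambda>r. distr (measure_pmf (cond_pmf (gw_law \<theta> r) {k. k \<noteq> 0})) borel
                     (\<lambda>k. real k / (real r)^2))
              \<mu>"
    using main_conv[OF gen] unfolding eq .
qed

end
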